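(* Let $\mu$ be the uniform probability measure on $\{-1,1\}^n$. There exists a universal constant $\kappa>0$ (independent of $n$) such that for every $V\subset\mathbb{R}^n$, $$\log\int \exp\Big(\sup_{\xi\in V}\{\langle\xi,x\rangle-\Lambda_\mu(\xi)\}\Big)\,d\mu(x)\le\kappa\, b(V).$$
   Context: $\Lambda_\mu(\xi)=\log\int e^{\langle\xi,x\rangle}d\mu(x)$ is the logarithmic Laplace transform (here $\Lambda_\mu(\xi)=\sum_i\log\cosh\xi_i$). $b(V)=\mathbb{E}\sup_{\xi\in V}\langle\xi,\varepsilon\rangle$ with $\varepsilon$ uniformly distributed on $\{-1,1\}^n$ (Rademacher mean-width). *)

theory Defs
  imports "HOL-Probability.Probability"
begin

text \<open>Vectors of R^n are represented as functions nat => real; only the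
coordinates i < n matter.\<close>

definition cube :: "nat \<Rightarrow> (nat \<Rightarrow> real) set" where
  "cube n = PiE {..<n} (\<lambda>_. {-1, 1})"

definition mu :: "nat \<Rightarrow> (nat \<Rightarrow> real) pmf" where
  "mu n = pmf_of_set (cube n)"

definition inner_n :: "nat \<Rightarrow> (nat \<Rightarrow> real) \<Rightarrow> (nat \<Rightarrow> real) \<Rightarrow> real" where
  "inner_n n \<xi> x = (\<Sum>i<n. \<xi> i * x i)"

definition log_laplace :: "nat \<Rightarrow> (nat \<Rightarrow> real) \<Rightarrow> real" where
  "log_laplace n \<xi> = ln (\<integral>x. exp (inner_n n \<xi> x) \<partial>(measure_pmf (mu n)))"

text \<open>Rademacher mean width b(V) = E sup_{xi in V} <xi, eps>, eps uniform on
{-1,1}^n; extended-real valued since the supremum may be infinite.\<close>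
definition rad_width :: "nat \<Rightarrow> (nat \<Rightarrow> real) set \<Rightarrow> ereal" where
  "rad_width n V = ereal (1 / 2 ^ n) * (\<Sum>\<epsilon>\<in>cube n. (SUP \<xi>\<in>V. ereal (inner_n n \<xi> \<epsilon>)))"

end

theory Submission
  imports Defs
begin

definition avg :: "nat \<Rightarrow> ((nat \<Rightarrow> real) \<Rightarrow> real) \<Rightarrow> real" where
  "avg n f = (\<Sum>x\<in>cube n. f x) / 2 ^ n"

lemma cube_Suc: "cube (Suc n) = (\<lambda>(y, g). g(n := y)) ` ({-1,1} \<times> cube n)"
  unfolding cube_def lessThan_Suc by (simp add: PiE_insert_eq)

lemma cube_finite: "finite (cube n)"
  unfolding cube_def by (rule finite_PiE) auto

lemma cube_card: "card (cube n) = 2 ^ n"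
  unfolding cube_def by (simp add: card_PiE numeral_2_eq_2)

lemma cube_ne: "cube n \<noteq> {}"
  using cube_card[of n] by auto

lemma sum_cube_Suc:
  "(\<Sum>x\<in>cube (Suc n). f x) = (\<Sum>y\<in>cube n. f (y(n := 1)) + f (y(n := -1)))"
proof -
  have inj: "inj_on (\<lambda>(y, g). g(n := y)) ({-1::real,1} \<times> cube n)"
    unfolding cube_def using inj_combinator[of n "{..<n}" "\<lambda>_. {-1::real,1}"] by simp
  have "(\<Sum>x\<in>cube (Suc n). f x) = (\<Sum>p\<in>{-1::real,1} \<times> cube n. f ((\<lambda>(y, g). g(n := y)) p))"
    unfolding cube_Suc by (rule sum.reindex[OF inj, unfolded comp_def])
  also have "\<dots> = (\<Sum>s\<in>{-1::real,1}. \<Sum>y\<in>cube n. f (y(n := s)))"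
    by (subst sum.cartesian_product) (simp add: case_prod_unfold)
  also have "\<dots> = (\<Sum>y\<in>cube n. f (y(n := 1)) + f (y(n := -1)))"
    by (simp add: sum.distrib add.commute)
  finally show ?thesis .
qed

lemma avg_Suc: "avg (Suc n) f = (avg n (\<lambda>y. f (y(n := 1))) + avg n (\<lambda>y. f (y(n := -1)))) / 2"
  unfolding avg_def sum_cube_Suc by (simp add: sum.distrib add_divide_distrib)

lemma avg_const: "avg n (\<lambda>_. c) = c"
  unfolding avg_def by (simp add: cube_card)

lemma avg_mono: "(\<And>x. x \<in> cube n \<Longrightarrow> f x \<le> g x) \<Longrightarrow> avg n f \<le> avg n g"
  unfolding avg_def by (intro divide_right_mono sum_mono) auto

lemma avg_add: "avg n (\<lambda>x. f x + g x) = avg n f + avg n g"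
  unfolding avg_def by (simp add: sum.distrib add_divide_distrib)

lemma avg_cmult: "avg n (\<lambda>x. c * f x) = c * avg n f"
  unfolding avg_def by (simp add: sum_distrib_left)

lemma avg_diff: "avg n (\<lambda>x. f x - g x) = avg n f - avg n g"
  unfolding avg_def by (simp add: sum_subtractf diff_divide_distrib)

lemma avg_integral: "(\<integral>x. f x \<partial>(measure_pmf (mu n))) = avg n f"
  unfolding mu_def avg_def using integral_pmf_of_set[OF cube_ne cube_finite] by (simp add: cube_card)

lemma cube_mem_Suc: "y \<in> cube n \<Longrightarrow> s \<in> {-1,1} \<Longrightarrow> y(n := s) \<in> cube (Suc n)"
  unfolding cube_Suc by auto

lemma cube_neg: "x \<in> cube n \<Longrightarrow> (\<lambda>i. if i < n then - x i else undefined) \<in> cube n"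
  unfolding cube_def PiE_def extensional_def by auto

lemma exp_avg: "exp (avg n f) \<le> avg n (\<lambda>x. exp (f x))"
proof -
  let ?m = "avg n f"
  have "avg n (\<lambda>x. exp ?m * (1 + (f x - ?m))) \<le> avg n (\<lambda>x. exp (f x))"
  proof (rule avg_mono)
    fix x
    have "1 + (f x - ?m) \<le> exp (f x - ?m)" by (rule exp_ge_add_one_self)
    then have "exp ?m * (1 + (f x - ?m)) \<le> exp ?m * exp (f x - ?m)" by simp
    then show "exp ?m * (1 + (f x - ?m)) \<le> exp (f x)" by (simp add: exp_diff)
  qed
  moreover have "avg n (\<lambda>x. exp ?m * (1 + (f x - ?m))) = exp ?m"
    by (simp add: avg_cmult avg_add avg_diff avg_const)
  ultimately show ?thesis by simp
qed

lemma jensen2: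
  "(exp (avg n a) + exp (avg n b)) / 2 \<le> exp (avg n (\<lambda>y. ln ((exp (a y) + exp (b y)) / 2)))"
proof -
  define h where "h y = ln ((exp (a y) + exp (b y)) / 2)" for y
  have eh: "exp (h y) = (exp (a y) + exp (b y)) / 2" for y
    unfolding h_def by (simp add: add_pos_pos)
  have "exp (avg n a) = exp (avg n h) * exp (avg n (\<lambda>y. a y - h y))"
    by (simp add: avg_diff flip: exp_add)
  also have "\<dots> \<le> exp (avg n h) * avg n (\<lambda>y. exp (a y - h y))"
    by (intro mult_left_mono exp_avg) auto
  finally have 1: "exp (avg n a) \<le> exp (avg n h) * avg n (\<lambda>y. exp (a y - h y))" .
  have "exp (avg n b) = exp (avg n h) * exp (avg n (\<lambda>y. b y - h y))"
    by (simp add: avg_diff flip: exp_add)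
  also have "\<dots> \<le> exp (avg n h) * avg n (\<lambda>y. exp (b y - h y))"
    by (intro mult_left_mono exp_avg) auto
  finally have 2: "exp (avg n b) \<le> exp (avg n h) * avg n (\<lambda>y. exp (b y - h y))" .
  have "avg n (\<lambda>y. exp (a y - h y)) + avg n (\<lambda>y. exp (b y - h y)) = avg n (\<lambda>y. 2)"
    unfolding avg_add[symmetric]
  proof (rule arg_cong[where f="avg n"], rule ext)
    fix y
    have "exp (a y - h y) + exp (b y - h y) = (exp (a y) + exp (b y)) / exp (h y)"
      by (simp add: exp_diff add_divide_distrib)
    also have "\<dots> = 2" unfolding eh
    proof -
      have "exp (a y) + exp (b y) > 0" by (simp add: add_pos_pos)
      then show "(exp (a y) + exp (b y)) / ((exp (a y) + exp (b y)) / 2) = 2" by (simp add: field_simps)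
    qed
    finally show "exp (a y - h y) + exp (b y - h y) = 2" .
  qed
  then have 3: "avg n (\<lambda>y. exp (a y - h y)) + avg n (\<lambda>y. exp (b y - h y)) = 2"
    by (simp add: avg_const)
  from 1 2 have "exp (avg n a) + exp (avg n b) \<le> exp (avg n h) * (avg n (\<lambda>y. exp (a y - h y)) + avg n (\<lambda>y. exp (b y - h y)))"
    by (simp add: distrib_left)
  then have "exp (avg n a) + exp (avg n b) \<le> exp (avg n h) * 2" unfolding 3 .
  then show ?thesis unfolding h_def by simp
qed

lemma core:
  fixes P Q R B :: real
  assumes "P > 0" "Q > 0" "R > 0" "B > 0" "R \<le> Q" "B \<le> P"
  shows "(P + Q)^2 \<le> (P + R) * (P / R) * (Q + B) * (Q / B)"
proof -
  have h1: "(Q + B) / B \<ge> (P + Q) / P"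
  proof -
    have "Q / B \<ge> Q / P" using assms by (intro divide_left_mono) auto
    then have "Q / B + 1 \<ge> Q / P + 1" by simp
    moreover have "(Q + B) / B = Q / B + 1" "(P + Q) / P = Q / P + 1" using assms by (simp_all add: field_simps)
    ultimately show ?thesis by simp
  qed
  have "(P + R) * (P / R) * (Q + B) * (Q / B) = ((P + R) * P * Q / R) * ((Q + B) / B)"
    by (simp add: field_simps)
  also have "\<dots> \<ge> ((P + R) * P * Q / R) * ((P + Q) / P)"
    using h1 assms by (intro mult_left_mono) auto
  also have "((P + R) * P * Q / R) * ((P + Q) / P) = (P + R) * Q * (P + Q) / R"
    using assms by (simp add: field_simps)
  finally have 2: "(P + R) * (P / R) * (Q + B) * (Q / B) \<ge> (P + R) * Q * (P + Q) / R" .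
  have "R * (P + Q) \<le> (P + R) * Q"
    using assms by (simp add: algebra_simps mult_left_mono)
  then have "(P + Q) \<le> (P + R) * Q / R" using assms by (simp add: field_simps)
  then have "(P + Q) * (P + Q) \<le> ((P + R) * Q / R) * (P + Q)"
    using assms by (intro mult_right_mono) auto
  then have "(P + Q)^2 \<le> (P + R) * Q * (P + Q) / R" by (simp add: power2_eq_square)
  with 2 show ?thesis by linarith
qed

lemma CL0:
  fixes D1 D2 X Y :: real
  assumes "D1 > 0" "D2 > 0" "X > 0" "Y > 0"
  shows "(D1 * X / (1 + X) + D2 / (1 + Y))^2 \<le> max (D1 * X) (D2 * Y) * max (D1 / X) (D2 / Y)"
proof -
  define P where "P = D1 * X / (1 + X)"
  define R where "R = D1 / (1 + X)"
  define Q where "Q = D2 / (1 + Y)"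
  define B where "B = D2 * Y / (1 + Y)"
  have pos: "P > 0" "Q > 0" "R > 0" "B > 0" unfolding P_def Q_def R_def B_def using assms by auto
  have "P + R = (D1 * X + D1) / (1 + X)" unfolding P_def R_def by (simp add: add_divide_distrib)
  also have "\<dots> = D1 * (1 + X) / (1 + X)" by (simp add: algebra_simps)
  finally have PR: "P + R = D1" using assms by simp
  have "Q + B = (D2 + D2 * Y) / (1 + Y)" unfolding Q_def B_def by (simp add: add_divide_distrib)
  also have "\<dots> = D2 * (1 + Y) / (1 + Y)" by (simp add: algebra_simps)
  finally have QB: "Q + B = D2" using assms by simp
  have m1: "D1 * X \<le> max (D1 * X) (D2 * Y)" "D2 * Y \<le> max (D1 * X) (D2 * Y)" by auto
  have m2: "D1 / X \<le> max (D1 / X) (D2 / Y)" "D2 / Y \<le> max (D1 / X) (D2 / Y)" by auto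
  have nn: "0 \<le> D1 * X" "0 \<le> D2 / Y" "0 \<le> D1 / X" "0 \<le> D2 * Y" using assms by auto
  show ?thesis
  proof (cases "Q \<le> R")
    case True
    have "(P + Q)^2 \<le> (P + R)^2" using True pos by (intro power_mono) auto
    also have "\<dots> = (D1 * X) * (D1 / X)" using PR assms by (simp add: power2_eq_square)
    also have "\<dots> \<le> max (D1 * X) (D2 * Y) * max (D1 / X) (D2 / Y)"
      using m1 m2 nn by (intro mult_mono) auto
    finally show ?thesis unfolding P_def Q_def .
  next
    case F1: False
    show ?thesis
    proof (cases "P \<le> B")
      case True
      have "(P + Q)^2 \<le> (B + Q)^2" using True pos by (intro power_mono) auto
      also have "\<dots> = (D2 * Y) * (D2 / Y)" using QB assms by (simp add: power2_eq_square add.commute)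
      also have "\<dots> \<le> max (D1 * X) (D2 * Y) * max (D1 / X) (D2 / Y)"
        using m1 m2 nn by (intro mult_mono) auto
      finally show ?thesis unfolding P_def Q_def .
    next
      case False
      have "(P + Q)^2 \<le> (P + R) * (P / R) * (Q + B) * (Q / B)"
        using F1 False pos by (intro core) auto
      also have "\<dots> = (D1 * X) * (D2 / Y)"
      proof -
        have "P / R = X" unfolding P_def R_def using assms by (simp add: divide_simps)
        moreover have "Q / B = 1 / Y" unfolding Q_def B_def using assms by (simp add: divide_simps)
        ultimately show ?thesis unfolding PR QB by simp
      qed
      also have "\<dots> \<le> max (D1 * X) (D2 * Y) * max (D1 / X) (D2 / Y)"
        using m1 m2 nn by (intro mult_mono) auto
      finally show ?thesis unfolding P_def Q_def .
    qed
  qed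
qed

lemma exp_cosh1: "exp ((d::real) + t - ln (cosh t)) = 2 * (exp d * exp (2*t) / (1 + exp (2*t)))"
proof -
  have c: "cosh t > 0" by simp
  have "exp (d + t - ln (cosh t)) = exp d * exp t / cosh t" using c by (simp add: exp_diff exp_add)
  also have "\<dots> = 2 * (exp d * exp (2*t) / (1 + exp (2*t)))"
    unfolding cosh_def by (simp add: field_simps exp_minus mult_exp_exp flip: exp_add)
  finally show ?thesis .
qed

lemma exp_cosh2: "exp ((d::real) - t - ln (cosh t)) = 2 * (exp d / (1 + exp (2*t)))"
proof -
  have c: "cosh t > 0" by simp
  have "exp (d - t - ln (cosh t)) = exp d * exp (-t) / cosh t" using c by (simp add: exp_diff exp_add exp_minus field_simps)
  also have "\<dots> = 2 * (exp d / (1 + exp (2*t)))"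
    unfolding cosh_def by (simp add: field_simps exp_minus mult_exp_exp flip: exp_add)
  finally show ?thesis .
qed

lemma CL:
  fixes d1 t1 d2 t2 :: real
  shows "(exp (d1 + t1 - ln (cosh t1)) + exp (d2 - t2 - ln (cosh t2)))^2
     \<le> 4 * (max (exp (d1 + 2*t1)) (exp (d2 + 2*t2)) * max (exp (d1 - 2*t1)) (exp (d2 - 2*t2)))"
proof -
  have e: "exp (d1 + 2*t1) = exp d1 * exp (2*t1)" "exp (d2 + 2*t2) = exp d2 * exp (2*t2)"
     "exp (d1 - 2*t1) = exp d1 / exp (2*t1)" "exp (d2 - 2*t2) = exp d2 / exp (2*t2)"
    by (simp_all add: exp_add exp_diff)
  have "(exp (d1 + t1 - ln (cosh t1)) + exp (d2 - t2 - ln (cosh t2)))^2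
     = 4 * (exp d1 * exp (2*t1) / (1 + exp (2*t1)) + exp d2 / (1 + exp (2*t2)))^2"
    unfolding exp_cosh1 exp_cosh2 by (simp add: power2_eq_square algebra_simps)
  also have "\<dots> \<le> 4 * (max (exp d1 * exp (2*t1)) (exp d2 * exp (2*t2)) * max (exp d1 / exp (2*t1)) (exp d2 / exp (2*t2)))"
    by (intro mult_left_mono CL0) auto
  finally show ?thesis unfolding e .
qed

lemma sup2:
  fixes f g :: "'a \<Rightarrow> real"
  assumes ne: "I \<noteq> {}" and H: "\<And>i j. i \<in> I \<Longrightarrow> j \<in> I \<Longrightarrow> exp (f i) + exp (g j) \<le> K"
  shows "exp (SUP i\<in>I. f i) + exp (SUP j\<in>I. g j) \<le> K"
proof -
  have 1: "exp (SUP i\<in>I. f i) + exp (g j) \<le> K" if j: "j \<in> I" for j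
  proof -
    have pos: "K - exp (g j) > 0" using H[OF j j] by (smt (verit) exp_gt_zero)
    have "(SUP i\<in>I. f i) \<le> ln (K - exp (g j))"
    proof (rule cSUP_least[OF ne])
      fix i assume "i \<in> I"
      then have "exp (f i) \<le> K - exp (g j)" using H[OF _ j] by force
      then show "f i \<le> ln (K - exp (g j))" using pos by (simp add: ln_ge_iff)
    qed
    then have "exp (SUP i\<in>I. f i) \<le> K - exp (g j)" using pos
      by (metis exp_le_cancel_iff exp_ln)
    then show ?thesis by simp
  qed
  obtain j0 where j0: "j0 \<in> I" using ne by auto
  have pos: "K - exp (SUP i\<in>I. f i) > 0" using 1[OF j0] by (smt (verit) exp_gt_zero)
  have "(SUP j\<in>I. g j) \<le> ln (K - exp (SUP i\<in>I. f i))"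
  proof (rule cSUP_least[OF ne])
    fix j assume "j \<in> I"
    then have "exp (g j) \<le> K - exp (SUP i\<in>I. f i)" using 1 by force
    then show "g j \<le> ln (K - exp (SUP i\<in>I. f i))" using pos by (simp add: ln_ge_iff)
  qed
  then have "exp (SUP j\<in>I. g j) \<le> K - exp (SUP i\<in>I. f i)" using pos
    by (metis exp_le_cancel_iff exp_ln)
  then show ?thesis by simp
qed

lemma PL:
  fixes d t :: "'a \<Rightarrow> real"
  assumes ne: "I \<noteq> {}" and b1: "bdd_above ((\<lambda>i. d i + 2 * t i) ` I)"
    and b2: "bdd_above ((\<lambda>i. d i - 2 * t i) ` I)"
  shows "ln ((exp (SUP i\<in>I. d i + t i - ln (cosh (t i))) + exp (SUP i\<in>I. d i - t i - ln (cosh (t i)))) / 2)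
     \<le> ((SUP i\<in>I. d i + 2 * t i) + (SUP i\<in>I. d i - 2 * t i)) / 2"
proof -
  define Rp where "Rp = (SUP i\<in>I. d i + 2 * t i)"
  define Rm where "Rm = (SUP i\<in>I. d i - 2 * t i)"
  define M where "M = exp ((Rp + Rm) / 2)"
  have M2: "M^2 = exp Rp * exp Rm" unfolding M_def
    by (simp add: power2_eq_square flip: exp_add)
  have key: "exp (d i + t i - ln (cosh (t i))) + exp (d j - t j - ln (cosh (t j))) \<le> 2 * M"
    if i: "i \<in> I" and j: "j \<in> I" for i j
  proof -
    have u1: "d i + 2 * t i \<le> Rp" "d j + 2 * t j \<le> Rp" unfolding Rp_def
      using i j b1 by (auto intro: cSUP_upper)
    have u2: "d i - 2 * t i \<le> Rm" "d j - 2 * t j \<le> Rm" unfolding Rm_def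
      using i j b2 by (auto intro: cSUP_upper)
    have m1: "max (exp (d i + 2 * t i)) (exp (d j + 2 * t j)) \<le> exp Rp" using u1 by simp
    have m2: "max (exp (d i - 2 * t i)) (exp (d j - 2 * t j)) \<le> exp Rm" using u2 by simp
    have "(exp (d i + t i - ln (cosh (t i))) + exp (d j - t j - ln (cosh (t j))))^2
       \<le> 4 * (max (exp (d i + 2 * t i)) (exp (d j + 2 * t j)) * max (exp (d i - 2 * t i)) (exp (d j - 2 * t j)))"
      by (rule CL)
    also have "\<dots> \<le> 4 * (exp Rp * exp Rm)"
      using m1 m2 by (intro mult_left_mono mult_mono) (auto simp: le_max_iff_disj)
    also have "\<dots> = (2 * M)^2" using M2 by (simp add: power2_eq_square)
    finally show ?thesis
      by (rule power2_le_imp_le) (simp add: M_def)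
  qed
  have "exp (SUP i\<in>I. d i + t i - ln (cosh (t i))) + exp (SUP i\<in>I. d i - t i - ln (cosh (t i))) \<le> 2 * M"
    by (rule sup2[OF ne key])
  then have "ln ((exp (SUP i\<in>I. d i + t i - ln (cosh (t i))) + exp (SUP i\<in>I. d i - t i - ln (cosh (t i)))) / 2) \<le> ln M"
    by (subst ln_le_cancel_iff) (auto simp: add_pos_pos M_def)
  also have "ln M = (Rp + Rm) / 2" unfolding M_def by simp
  finally show ?thesis unfolding Rp_def Rm_def .
qed

lemma lncosh_nonneg: "ln (cosh (t::real)) \<ge> 0"
  using cosh_real_ge_1[of t] by simp

lemma inner_Suc: "inner_n (Suc n) \<xi> (y(n := s)) = inner_n n \<xi> y + \<xi> n * s"
  unfolding inner_n_def by (simp add: sum.lessThan_Suc)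

lemma sumlc_Suc:
  "(\<Sum>k<Suc n. \<xi> k * (y(n := s)) k - ln (cosh (\<xi> k)))
     = (\<Sum>k<n. \<xi> k * y k - ln (cosh (\<xi> k))) + (\<xi> n * s - ln (cosh (\<xi> n)))"
  by (simp add: sum.lessThan_Suc)

lemma avg_divide: "avg n (\<lambda>x. f x / c) = avg n f / c"
  unfolding avg_def by (simp add: sum_divide_distrib mult.commute)

lemma bdd_comb:
  fixes f g h :: "'a \<Rightarrow> real"
  assumes "bdd_above (f ` V)" "bdd_above (g ` V)" "\<And>\<xi>. \<xi> \<in> V \<Longrightarrow> h \<xi> \<le> a * f \<xi> + b * g \<xi>"
    "a \<ge> 0" "b \<ge> 0"
  shows "bdd_above (h ` V)"
proof -
  obtain M1 where M1: "\<And>\<xi>. \<xi> \<in> V \<Longrightarrow> f \<xi> \<le> M1" using assms(1) by (auto simp: bdd_above_def)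
  obtain M2 where M2: "\<And>\<xi>. \<xi> \<in> V \<Longrightarrow> g \<xi> \<le> M2" using assms(2) by (auto simp: bdd_above_def)
  show ?thesis
  proof (rule bdd_aboveI2)
    fix \<xi> assume x: "\<xi> \<in> V"
    have "a * f \<xi> \<le> a * M1" using M1[OF x] assms(4) by (rule mult_left_mono)
    moreover have "b * g \<xi> \<le> b * M2" using M2[OF x] assms(5) by (rule mult_left_mono)
    ultimately show "h \<xi> \<le> a * M1 + b * M2" using assms(3)[OF x] by linarith
  qed
qed

lemma main:
  assumes ne: "V \<noteq> {}"
  shows "(\<forall>x\<in>cube n. bdd_above ((\<lambda>\<xi>. c \<xi> + 2 * inner_n n \<xi> x) ` V)) \<Longrightarrow>
    avg n (\<lambda>x. exp (SUP \<xi>\<in>V. c \<xi> + (\<Sum>k<n. \<xi> k * x k - ln (cosh (\<xi> k)))))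
      \<le> exp (avg n (\<lambda>x. SUP \<xi>\<in>V. c \<xi> + 2 * inner_n n \<xi> x))"
proof (induction n arbitrary: c)
  case 0
  show ?case by (simp add: avg_def cube_def inner_n_def)
next
  case (Suc n)
  note H = Suc.prems
  define cp where "cp \<xi> = c \<xi> + \<xi> n - ln (cosh (\<xi> n))" for \<xi> :: "nat \<Rightarrow> real"
  define cm where "cm \<xi> = c \<xi> - \<xi> n - ln (cosh (\<xi> n))" for \<xi> :: "nat \<Rightarrow> real"
  define d where "d y \<xi> = c \<xi> + 2 * inner_n n \<xi> y" for y \<xi>
  have B1: "bdd_above ((\<lambda>\<xi>. d y \<xi> + 2 * \<xi> n) ` V)" if y: "y \<in> cube n" for y
  proof -
    have "bdd_above ((\<lambda>\<xi>. c \<xi> + 2 * inner_n (Suc n) \<xi> (y(n := 1))) ` V)"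
      using H cube_mem_Suc[OF y] by auto
    then show ?thesis unfolding inner_Suc d_def by (simp add: algebra_simps)
  qed
  have B2: "bdd_above ((\<lambda>\<xi>. d y \<xi> - 2 * \<xi> n) ` V)" if y: "y \<in> cube n" for y
  proof -
    have "bdd_above ((\<lambda>\<xi>. c \<xi> + 2 * inner_n (Suc n) \<xi> (y(n := -1))) ` V)"
      using H cube_mem_Suc[OF y] by auto
    then show ?thesis unfolding inner_Suc d_def by (simp add: algebra_simps)
  qed
  have Hp: "\<forall>y\<in>cube n. bdd_above ((\<lambda>\<xi>. cp \<xi> + 2 * inner_n n \<xi> y) ` V)"
  proof
    fix y assume y: "y \<in> cube n"
    show "bdd_above ((\<lambda>\<xi>. cp \<xi> + 2 * inner_n n \<xi> y) ` V)"
    proof (rule bdd_comb[OF B1[OF y] B2[OF y], of _ "3/4" "1/4"])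
      fix \<xi>
      show "cp \<xi> + 2 * inner_n n \<xi> y \<le> 3/4 * (d y \<xi> + 2 * \<xi> n) + 1/4 * (d y \<xi> - 2 * \<xi> n)"
        unfolding cp_def d_def using lncosh_nonneg[of "\<xi> n"] by (simp add: algebra_simps)
    qed auto
  qed
  have Hm: "\<forall>y\<in>cube n. bdd_above ((\<lambda>\<xi>. cm \<xi> + 2 * inner_n n \<xi> y) ` V)"
  proof
    fix y assume y: "y \<in> cube n"
    show "bdd_above ((\<lambda>\<xi>. cm \<xi> + 2 * inner_n n \<xi> y) ` V)"
    proof (rule bdd_comb[OF B1[OF y] B2[OF y], of _ "1/4" "3/4"])
      fix \<xi>
      show "cm \<xi> + 2 * inner_n n \<xi> y \<le> 1/4 * (d y \<xi> + 2 * \<xi> n) + 3/4 * (d y \<xi> - 2 * \<xi> n)"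
        unfolding cm_def d_def using lncosh_nonneg[of "\<xi> n"] by (simp add: algebra_simps)
    qed auto
  qed
  note IHp = Suc.IH[of cp, OF Hp]
  note IHm = Suc.IH[of cm, OF Hm]
  define Sp where "Sp y = (SUP \<xi>\<in>V. cp \<xi> + (\<Sum>k<n. \<xi> k * y k - ln (cosh (\<xi> k))))" for y
  define Sm where "Sm y = (SUP \<xi>\<in>V. cm \<xi> + (\<Sum>k<n. \<xi> k * y k - ln (cosh (\<xi> k))))" for y
  define Tp where "Tp y = (SUP \<xi>\<in>V. cp \<xi> + 2 * inner_n n \<xi> y)" for y
  define Tm where "Tm y = (SUP \<xi>\<in>V. cm \<xi> + 2 * inner_n n \<xi> y)" for y
  have e1: "avg (Suc n) (\<lambda>x. exp (SUP \<xi>\<in>V. c \<xi> + (\<Sum>k<Suc n. \<xi> k * x k - ln (cosh (\<xi> k)))))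
     = (avg n (\<lambda>y. exp (Sp y)) + avg n (\<lambda>y. exp (Sm y))) / 2"
    unfolding avg_Suc sumlc_Suc Sp_def Sm_def cp_def cm_def by (simp add: algebra_simps)
  have "avg (Suc n) (\<lambda>x. exp (SUP \<xi>\<in>V. c \<xi> + (\<Sum>k<Suc n. \<xi> k * x k - ln (cosh (\<xi> k)))))
     \<le> (exp (avg n Tp) + exp (avg n Tm)) / 2"
    unfolding e1 using IHp IHm unfolding Sp_def Sm_def Tp_def Tm_def by simp
  also have "\<dots> \<le> exp (avg n (\<lambda>y. ln ((exp (Tp y) + exp (Tm y)) / 2)))"
    by (rule jensen2)
  also have "\<dots> \<le> exp (avg n (\<lambda>y. ((SUP \<xi>\<in>V. d y \<xi> + 2 * \<xi> n) + (SUP \<xi>\<in>V. d y \<xi> - 2 * \<xi> n)) / 2))"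
  proof (subst exp_le_cancel_iff, rule avg_mono)
    fix y assume y: "y \<in> cube n"
    have "Tp y = (SUP \<xi>\<in>V. d y \<xi> + \<xi> n - ln (cosh (\<xi> n)))"
      unfolding Tp_def cp_def d_def by (simp add: algebra_simps)
    moreover have "Tm y = (SUP \<xi>\<in>V. d y \<xi> - \<xi> n - ln (cosh (\<xi> n)))"
      unfolding Tm_def cm_def d_def by (simp add: algebra_simps)
    ultimately show "ln ((exp (Tp y) + exp (Tm y)) / 2)
       \<le> ((SUP \<xi>\<in>V. d y \<xi> + 2 * \<xi> n) + (SUP \<xi>\<in>V. d y \<xi> - 2 * \<xi> n)) / 2"
      using PL[OF ne B1[OF y] B2[OF y]] by simp
  qed
  also have "\<dots> = exp (avg (Suc n) (\<lambda>x. SUP \<xi>\<in>V. c \<xi> + 2 * inner_n (Suc n) \<xi> x))"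
    unfolding avg_Suc inner_Suc d_def by (simp add: algebra_simps avg_add avg_divide add_divide_distrib)
  finally show ?case .
qed

lemma avg_exp_inner: "avg n (\<lambda>x. exp (inner_n n \<xi> x)) = (\<Prod>k<n. cosh (\<xi> k))"
proof (induction n)
  case 0
  then show ?case by (simp add: avg_def cube_def inner_n_def)
next
  case (Suc n)
  have a1: "avg n (\<lambda>y. exp (inner_n n \<xi> y + \<xi> n * 1)) = exp (\<xi> n) * avg n (\<lambda>y. exp (inner_n n \<xi> y))"
    by (simp add: exp_add avg_cmult[symmetric] mult.commute)
  have a2: "avg n (\<lambda>y. exp (inner_n n \<xi> y + \<xi> n * -1)) = exp (- \<xi> n) * avg n (\<lambda>y. exp (inner_n n \<xi> y))"
    by (simp add: exp_diff exp_minus avg_cmult[symmetric] field_simps)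
  have "avg (Suc n) (\<lambda>x. exp (inner_n (Suc n) \<xi> x))
     = (exp (\<xi> n) * avg n (\<lambda>y. exp (inner_n n \<xi> y)) + exp (- \<xi> n) * avg n (\<lambda>y. exp (inner_n n \<xi> y))) / 2"
    unfolding avg_Suc inner_Suc a1 a2 ..
  also have "\<dots> = avg n (\<lambda>y. exp (inner_n n \<xi> y)) * cosh (\<xi> n)"
    unfolding cosh_def by (simp add: algebra_simps add_divide_distrib)
  finally show ?case using Suc by simp
qed

lemma log_laplace_eq: "log_laplace n \<xi> = (\<Sum>k<n. ln (cosh (\<xi> k)))"
  unfolding log_laplace_def avg_integral avg_exp_inner
  by (rule ln_prod) (auto simp: cosh_real_pos[THEN less_imp_neq[symmetric]])

lemma cSUP_cmult:
  fixes f :: "'a \<Rightarrow> real"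
  assumes ne: "V \<noteq> {}" and b: "bdd_above (f ` V)" and k: "k > 0"
  shows "(SUP \<xi>\<in>V. k * f \<xi>) = k * (SUP \<xi>\<in>V. f \<xi>)"
proof (rule antisym)
  show "(SUP \<xi>\<in>V. k * f \<xi>) \<le> k * (SUP \<xi>\<in>V. f \<xi>)"
    using k by (intro cSUP_least[OF ne]) (auto intro: cSUP_upper[OF _ b])
  have b2: "bdd_above ((\<lambda>\<xi>. k * f \<xi>) ` V)"
    using b k by (intro bdd_comb[OF b b, of _ k 0]) auto
  have "(SUP \<xi>\<in>V. f \<xi>) \<le> (SUP \<xi>\<in>V. k * f \<xi>) / k"
  proof (intro cSUP_least[OF ne])
    fix \<xi> assume "\<xi> \<in> V"
    then have "k * f \<xi> \<le> (SUP \<xi>\<in>V. k * f \<xi>)" by (intro cSUP_upper[OF _ b2])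
    then show "f \<xi> \<le> (SUP \<xi>\<in>V. k * f \<xi>) / k" using k by (simp add: field_simps)
  qed
  then show "k * (SUP \<xi>\<in>V. f \<xi>) \<le> (SUP \<xi>\<in>V. k * f \<xi>)" using k by (simp add: field_simps)
qed

lemma ereal_SUP_bdd:
  fixes f :: "'a \<Rightarrow> real"
  assumes ne: "V \<noteq> {}" and b: "bdd_above (f ` V)"
  shows "(SUP \<xi>\<in>V. ereal (f \<xi>)) = ereal (SUP \<xi>\<in>V. f \<xi>)"
proof -
  obtain M where M: "\<And>\<xi>. \<xi> \<in> V \<Longrightarrow> f \<xi> \<le> M" using b by (auto simp: bdd_above_def)
  obtain \<xi>0 where x0: "\<xi>0 \<in> V" using ne by auto
  have "(SUP \<xi>\<in>V. ereal (f \<xi>)) \<le> ereal M" using M by (auto intro: SUP_least)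
  moreover have "ereal (f \<xi>0) \<le> (SUP \<xi>\<in>V. ereal (f \<xi>))" using x0 by (rule SUP_upper)
  ultimately have "\<bar>SUP \<xi>\<in>V. ereal (f \<xi>)\<bar> \<noteq> \<infinity>" by auto
  then show ?thesis by (simp add: ereal_SUP)
qed

theorem proposition2p4:
  shows "\<exists>\<kappa>::real. \<kappa> > 0 \<and>
    (\<forall>(n::nat) (V::(nat \<Rightarrow> real) set).
       V \<noteq> {} \<longrightarrow> V \<subseteq> {\<xi>. \<forall>i\<ge>n. \<xi> i = 0} \<longrightarrow>
       ereal (ln (\<integral>x. exp (SUP \<xi>\<in>V. inner_n n \<xi> x - log_laplace n \<xi>) \<partial>(measure_pmf (mu n))))
         \<le> ereal \<kappa> * rad_width n V)"
proof (intro exI[of _ 2] conjI allI impI)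
  fix n :: nat and V :: "(nat \<Rightarrow> real) set"
  assume ne: "V \<noteq> {}"
  show "ereal (ln (\<integral>x. exp (SUP \<xi>\<in>V. inner_n n \<xi> x - log_laplace n \<xi>) \<partial>(measure_pmf (mu n))))
         \<le> ereal 2 * rad_width n V"
  proof (cases "\<forall>x\<in>cube n. bdd_above ((\<lambda>\<xi>. inner_n n \<xi> x) ` V)")
    case True
    have H: "\<forall>x\<in>cube n. bdd_above ((\<lambda>\<xi>. (\<lambda>_. 0) \<xi> + 2 * inner_n n \<xi> x) ` V)"
    proof
      fix x assume "x \<in> cube n"
      then have b: "bdd_above ((\<lambda>\<xi>. inner_n n \<xi> x) ` V)" using True by auto
      show "bdd_above ((\<lambda>\<xi>. (\<lambda>_. 0) \<xi> + 2 * inner_n n \<xi> x) ` V)"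
        by (rule bdd_comb[OF b b, of _ 2 0]) auto
    qed
    have M: "avg n (\<lambda>x. exp (SUP \<xi>\<in>V. (\<Sum>k<n. \<xi> k * x k - ln (cosh (\<xi> k)))))
      \<le> exp (avg n (\<lambda>x. SUP \<xi>\<in>V. 2 * inner_n n \<xi> x))"
      using main[OF ne H] by (simp only: add_0_left)
    have I: "(\<integral>x. exp (SUP \<xi>\<in>V. inner_n n \<xi> x - log_laplace n \<xi>) \<partial>(measure_pmf (mu n)))
       = avg n (\<lambda>x. exp (SUP \<xi>\<in>V. (\<Sum>k<n. \<xi> k * x k - ln (cosh (\<xi> k)))))"
      unfolding avg_integral log_laplace_eq inner_n_def by (simp add: sum_subtractf)
    have pos: "avg n (\<lambda>x. exp (SUP \<xi>\<in>V. (\<Sum>k<n. \<xi> k * x k - ln (cosh (\<xi> k))))) > 0"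
      unfolding avg_def using cube_finite cube_ne by (intro divide_pos_pos sum_pos) auto
    have A: "avg n (\<lambda>x. SUP \<xi>\<in>V. 2 * inner_n n \<xi> x) = 2 * avg n (\<lambda>x. SUP \<xi>\<in>V. inner_n n \<xi> x)"
    proof -
      have "avg n (\<lambda>x. SUP \<xi>\<in>V. 2 * inner_n n \<xi> x) = avg n (\<lambda>x. 2 * (SUP \<xi>\<in>V. inner_n n \<xi> x))"
        unfolding avg_def using cSUP_cmult[OF ne _, of "\<lambda>\<xi>. inner_n n \<xi> _" 2] True
        by (intro arg_cong[where f="\<lambda>s. s / 2 ^ n"] sum.cong) auto
      then show ?thesis by (simp add: avg_cmult)
    qed
    have R: "rad_width n V = ereal (avg n (\<lambda>x. SUP \<xi>\<in>V. inner_n n \<xi> x))"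
    proof -
      have "rad_width n V = ereal (1 / 2 ^ n) * (\<Sum>\<epsilon>\<in>cube n. ereal (SUP \<xi>\<in>V. inner_n n \<xi> \<epsilon>))"
        unfolding rad_width_def using ereal_SUP_bdd[OF ne] True
        by (intro arg_cong[where f="\<lambda>s. ereal (1 / 2 ^ n) * s"] sum.cong) auto
      then show ?thesis by (simp add: avg_def)
    qed
    have "ln (\<integral>x. exp (SUP \<xi>\<in>V. inner_n n \<xi> x - log_laplace n \<xi>) \<partial>(measure_pmf (mu n)))
       \<le> 2 * avg n (\<lambda>x. SUP \<xi>\<in>V. inner_n n \<xi> x)"
    proof -
      have "avg n (\<lambda>x. exp (SUP \<xi>\<in>V. (\<Sum>k<n. \<xi> k * x k - ln (cosh (\<xi> k)))))
          \<le> exp (2 * avg n (\<lambda>x. SUP \<xi>\<in>V. inner_n n \<xi> x))" using M unfolding A .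
      then have "ln (avg n (\<lambda>x. exp (SUP \<xi>\<in>V. (\<Sum>k<n. \<xi> k * x k - ln (cosh (\<xi> k))))))
          \<le> ln (exp (2 * avg n (\<lambda>x. SUP \<xi>\<in>V. inner_n n \<xi> x)))"
        using pos by (subst ln_le_cancel_iff) auto
      then show ?thesis unfolding I by simp
    qed
    then show ?thesis unfolding R by simp
  next
    case False
    then obtain x where x: "x \<in> cube n" and nb: "\<not> bdd_above ((\<lambda>\<xi>. inner_n n \<xi> x) ` V)" by auto
    have inf: "(SUP \<xi>\<in>V. ereal (inner_n n \<xi> x)) = \<infinity>"
    proof (rule SUP_PInfty)
      fix m :: nat
      from nb obtain \<xi> where "\<xi> \<in> V" "\<not> inner_n n \<xi> x \<le> real m"
        unfolding bdd_above_def by auto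
      then show "\<exists>\<xi>\<in>V. ereal (real m) \<le> ereal (inner_n n \<xi> x)" by (auto intro!: bexI[of _ \<xi>])
    qed
    have "(\<Sum>\<epsilon>\<in>cube n. (SUP \<xi>\<in>V. ereal (inner_n n \<xi> \<epsilon>))) = \<infinity>"
      unfolding sum_Pinfty using cube_finite x inf by auto
    then have "rad_width n V = \<infinity>" unfolding rad_width_def by simp
    then show ?thesis by simp
  qed
qed simp

end
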